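(* Let $V$ be a real vector space of finite even dimension with nondegenerate quadratic form $Q$, and let $\rho$ be a nonzero $c$-compatible representation of $\mathbb{C}l(V)$ on a finite-dimensional complex vector space $K$ with nondegenerate hermitian form $(\cdot,\cdot)$. Let $\sigma=\mathrm{Ad}_b\circ c$ be an admissible real structure with $b$ in the complex Clifford group. For $x\in\mathbb{C}l(V)$ let $(\cdot,\cdot)_x=(\cdot,\rho(x)\cdot)$. Then $(\cdot,\cdot)_x$ is a $\sigma$-compatible Krein product on $K$ iff $x=x^\times$ and $x$ is proportional to $b^{-1}$.
   Context: $Cl(V,Q)$ is the real Clifford algebra with $v^2=+Q(v)$, $\mathbb{C}l(V)$ its complexification with complex conjugation $c$; $T$ the linear antiautomorphism restricting to the identity on $V$; $a^\times=c(T(a))$; for a real structure $\sigma$, $a^{\times_\sigma}=\sigma(T(a))$. A real structure is an involutive antilinear algebra automorphism stabilizing $V^{\mathbb{C}}$; admissible means commuting with $c$; $\mathrm{Ad}_b(a)=bab^{-1}$; the complex Clifford group consists of invertible $g$ with $gV^{\mathbb{C}}g^{-1}\subset V^{\mathbb{C}}$. $\rho$ is $c$-compatible if $(\rho(a)\psi,\phi)=(\psi,\rho(a^\times)\phi)$ for all $a,\psi,\phi$. A Krein product is a nondegenerate hermitian form $(\cdot,\cdot)'$; it is $\sigma$-compatible if $(\rho(a)\psi,\phi)'=(\psi,\rho(a^{\times_\sigma})\phi)'$ for all $a,\psi,\phi$. "Proportional" means a nonzero complex multiple. *)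

theory Defs
  imports "HOL-Analysis.Analysis"
begin

text \<open>Complexified Clifford algebra of V = R^n with diagonal quadratic form
  Q(v) = sum q_i v_i^2 (q_i nonzero), convention v^2 = +Q(v).
  Elements are coefficient functions on blades (subsets of {..<n}).\<close>

type_synonym clel = "nat set \<Rightarrow> complex"

definition cl_carrier :: "nat \<Rightarrow> clel set" where
  "cl_carrier n = {x. \<forall>A. x A \<noteq> 0 \<longrightarrow> A \<subseteq> {..<n}}"

definition blade_sign :: "(nat \<Rightarrow> real) \<Rightarrow> nat set \<Rightarrow> nat set \<Rightarrow> complex" where
  "blade_sign q A B = (-1) ^ card {(i,j). i \<in> A \<and> j \<in> B \<and> j < i}
      * complex_of_real (\<Prod>i\<in>A \<inter> B. q i)"

definition cl_mult :: "nat \<Rightarrow> (nat \<Rightarrow> real) \<Rightarrow> clel \<Rightarrow> clel \<Rightarrow> clel" where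
  "cl_mult n q x y = (\<lambda>C. \<Sum>A\<in>Pow {..<n}. \<Sum>B\<in>Pow {..<n}.
      if (A - B) \<union> (B - A) = C then x A * y B * blade_sign q A B else 0)"

definition cl_one :: clel where
  "cl_one = (\<lambda>A. if A = {} then 1 else 0)"

definition cl_add :: "clel \<Rightarrow> clel \<Rightarrow> clel" where
  "cl_add x y = (\<lambda>A. x A + y A)"

definition cl_scale :: "complex \<Rightarrow> clel \<Rightarrow> clel" where
  "cl_scale c x = (\<lambda>A. c * x A)"

definition cl_conj :: "clel \<Rightarrow> clel" where
  "cl_conj x = (\<lambda>A. cnj (x A))"

text \<open>T: the complex-linear antiautomorphism that is the identity on V (reversion)\<close>
definition cl_rev :: "clel \<Rightarrow> clel" where
  "cl_rev x = (\<lambda>A. (-1) ^ (card A * (card A - 1) div 2) * x A)"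

definition cl_cross :: "clel \<Rightarrow> clel" where
  "cl_cross x = cl_conj (cl_rev x)"

definition cl_vectors :: "nat \<Rightarrow> clel set" where
  "cl_vectors n = {x \<in> cl_carrier n. \<forall>A. x A \<noteq> 0 \<longrightarrow> card A = 1}"

definition cl_invertible :: "nat \<Rightarrow> (nat \<Rightarrow> real) \<Rightarrow> clel \<Rightarrow> bool" where
  "cl_invertible n q g \<longleftrightarrow> g \<in> cl_carrier n \<and>
     (\<exists>h\<in>cl_carrier n. cl_mult n q g h = cl_one \<and> cl_mult n q h g = cl_one)"

definition cl_inv :: "nat \<Rightarrow> (nat \<Rightarrow> real) \<Rightarrow> clel \<Rightarrow> clel" where
  "cl_inv n q g = (SOME h. h \<in> cl_carrier n \<and> cl_mult n q g h = cl_one \<and> cl_mult n q h g = cl_one)"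

definition cl_group :: "nat \<Rightarrow> (nat \<Rightarrow> real) \<Rightarrow> clel set" where
  "cl_group n q = {g. cl_invertible n q g \<and>
     (\<forall>v\<in>cl_vectors n. cl_mult n q (cl_mult n q g v) (cl_inv n q g) \<in> cl_vectors n)}"

definition real_structure :: "nat \<Rightarrow> (nat \<Rightarrow> real) \<Rightarrow> (clel \<Rightarrow> clel) \<Rightarrow> bool" where
  "real_structure n q \<sigma> \<longleftrightarrow>
     (\<forall>x\<in>cl_carrier n. \<sigma> x \<in> cl_carrier n) \<and>
     (\<forall>x\<in>cl_carrier n. \<sigma> (\<sigma> x) = x) \<and>
     (\<forall>x\<in>cl_carrier n. \<forall>y\<in>cl_carrier n. \<sigma> (cl_add x y) = cl_add (\<sigma> x) (\<sigma> y)) \<and>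
     (\<forall>c. \<forall>x\<in>cl_carrier n. \<sigma> (cl_scale c x) = cl_scale (cnj c) (\<sigma> x)) \<and>
     (\<forall>x\<in>cl_carrier n. \<forall>y\<in>cl_carrier n. \<sigma> (cl_mult n q x y) = cl_mult n q (\<sigma> x) (\<sigma> y)) \<and>
     \<sigma> ` cl_vectors n \<subseteq> cl_vectors n"

definition admissible_real_structure :: "nat \<Rightarrow> (nat \<Rightarrow> real) \<Rightarrow> (clel \<Rightarrow> clel) \<Rightarrow> bool" where
  "admissible_real_structure n q \<sigma> \<longleftrightarrow> real_structure n q \<sigma> \<and>
     (\<forall>x\<in>cl_carrier n. \<sigma> (cl_conj x) = cl_conj (\<sigma> x))"

definition cross_sigma :: "(clel \<Rightarrow> clel) \<Rightarrow> clel \<Rightarrow> clel" where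
  "cross_sigma \<sigma> x = \<sigma> (cl_rev x)"

text \<open>Forms on K = complex^'k, antilinear in the first argument, linear in the second.\<close>
definition hermitian_form :: "(complex^'k \<Rightarrow> complex^'k \<Rightarrow> complex) \<Rightarrow> bool" where
  "hermitian_form h \<longleftrightarrow>
     (\<forall>\<psi> \<phi> \<eta>. h \<psi> (\<phi> + \<eta>) = h \<psi> \<phi> + h \<psi> \<eta>) \<and>
     (\<forall>\<psi> \<phi> c. h \<psi> (c *s \<phi>) = c * h \<psi> \<phi>) \<and>
     (\<forall>\<psi> \<phi>. h \<phi> \<psi> = cnj (h \<psi> \<phi>))"

definition nondegenerate_form :: "(complex^'k \<Rightarrow> complex^'k \<Rightarrow> complex) \<Rightarrow> bool" where
  "nondegenerate_form h \<longleftrightarrow> (\<forall>\<psi>. (\<forall>\<phi>. h \<psi> \<phi> = 0) \<longrightarrow> \<psi> = 0)"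

definition krein_product :: "(complex^'k \<Rightarrow> complex^'k \<Rightarrow> complex) \<Rightarrow> bool" where
  "krein_product h \<longleftrightarrow> hermitian_form h \<and> nondegenerate_form h"

definition cl_rep :: "nat \<Rightarrow> (nat \<Rightarrow> real) \<Rightarrow> (clel \<Rightarrow> complex^'k^'k) \<Rightarrow> bool" where
  "cl_rep n q \<rho> \<longleftrightarrow>
     (\<forall>x\<in>cl_carrier n. \<forall>y\<in>cl_carrier n. \<rho> (cl_add x y) = \<rho> x + \<rho> y) \<and>
     (\<forall>c. \<forall>x\<in>cl_carrier n. \<rho> (cl_scale c x) = (\<chi> i j. c * \<rho> x $ i $ j)) \<and>
     (\<forall>x\<in>cl_carrier n. \<forall>y\<in>cl_carrier n. \<rho> (cl_mult n q x y) = \<rho> x ** \<rho> y) \<and>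
     \<rho> cl_one = mat 1"

definition c_compatible :: "nat \<Rightarrow> (complex^'k \<Rightarrow> complex^'k \<Rightarrow> complex) \<Rightarrow> (clel \<Rightarrow> complex^'k^'k) \<Rightarrow> bool" where
  "c_compatible n h \<rho> \<longleftrightarrow>
     (\<forall>a\<in>cl_carrier n. \<forall>\<psi> \<phi>. h (\<rho> a *v \<psi>) \<phi> = h \<psi> (\<rho> (cl_cross a) *v \<phi>))"

definition sigma_compatible :: "nat \<Rightarrow> (clel \<Rightarrow> clel) \<Rightarrow> (complex^'k \<Rightarrow> complex^'k \<Rightarrow> complex) \<Rightarrow> (clel \<Rightarrow> complex^'k^'k) \<Rightarrow> bool" where
  "sigma_compatible n \<sigma> h \<rho> \<longleftrightarrow>
     (\<forall>a\<in>cl_carrier n. \<forall>\<psi> \<phi>. h (\<rho> a *v \<psi>) \<phi> = h \<psi> (\<rho> (cross_sigma \<sigma> a) *v \<phi>))"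

end

theory Submission
  imports Defs
begin



definition blade :: "nat set \<Rightarrow> clel" where
  "blade A = (\<lambda>C. if C = A then 1 else 0)"

lemma blade_app: "blade A C = (if C = A then 1 else 0)"
  unfolding blade_def by simp

lemma mult_carrier: "cl_mult n q x y \<in> cl_carrier n"
  unfolding cl_carrier_def cl_mult_def
proof (intro CollectI allI impI)
  fix C assume "(\<Sum>A\<in>Pow {..<n}. \<Sum>B\<in>Pow {..<n}.
      if (A - B) \<union> (B - A) = C then x A * y B * blade_sign q A B else 0) \<noteq> 0"
  then obtain A where A: "A \<in> Pow {..<n}" and "(\<Sum>B\<in>Pow {..<n}.
      if (A - B) \<union> (B - A) = C then x A * y B * blade_sign q A B else 0) \<noteq> 0"
    by (rule sum.not_neutral_contains_not_neutral)
  from this(2) obtain B where B: "B \<in> Pow {..<n}" and "(if (A - B) \<union> (B - A) = C then x A * y B * blade_sign q A B else 0) \<noteq> 0"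
    by (rule sum.not_neutral_contains_not_neutral)
  then have "(A - B) \<union> (B - A) = C" by (auto split: if_splits)
  then show "C \<subseteq> {..<n}" using A B by auto
qed

lemma add_carrier: "x \<in> cl_carrier n \<Longrightarrow> y \<in> cl_carrier n \<Longrightarrow> cl_add x y \<in> cl_carrier n"
proof -
  assume x: "x \<in> cl_carrier n" and y: "y \<in> cl_carrier n"
  show ?thesis unfolding cl_carrier_def cl_add_def
  proof (intro CollectI allI impI)
    fix A assume "x A + y A \<noteq> 0"
    then have "x A \<noteq> 0 \<or> y A \<noteq> 0" by auto
    then show "A \<subseteq> {..<n}" using x y unfolding cl_carrier_def by auto
  qed
qed
lemma scale_carrier: "x \<in> cl_carrier n \<Longrightarrow> cl_scale c x \<in> cl_carrier n"
  unfolding cl_carrier_def cl_scale_def by auto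
lemma conj_carrier: "x \<in> cl_carrier n \<Longrightarrow> cl_conj x \<in> cl_carrier n"
  unfolding cl_carrier_def cl_conj_def by auto
lemma rev_carrier: "x \<in> cl_carrier n \<Longrightarrow> cl_rev x \<in> cl_carrier n"
  unfolding cl_carrier_def cl_rev_def by auto
lemma cross_carrier: "x \<in> cl_carrier n \<Longrightarrow> cl_cross x \<in> cl_carrier n"
  unfolding cl_cross_def by (simp add: conj_carrier rev_carrier)
lemma one_carrier: "cl_one \<in> cl_carrier n"
  unfolding cl_carrier_def cl_one_def by auto
lemma blade_carrier: "A \<subseteq> {..<n} \<Longrightarrow> blade A \<in> cl_carrier n"
  unfolding cl_carrier_def blade_def by auto
lemma cross_cross: "cl_cross (cl_cross x) = x"
proof -
  have "((-1::complex) ^ m) * ((-1) ^ m) = 1" for m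
    by (simp add: power_mult_distrib[symmetric])
  then show ?thesis
    unfolding cl_cross_def cl_conj_def cl_rev_def
    by (auto simp: fun_eq_iff mult.assoc[symmetric])
qed

lemma mult_blade_left:
  assumes A: "A \<subseteq> {..<n}" and z: "z \<in> cl_carrier n"
  shows "cl_mult n q (blade A) z C = blade_sign q A ((A - C) \<union> (C - A)) * z ((A - C) \<union> (C - A))"
proof -
  let ?D = "(A - C) \<union> (C - A)"
  have eq: "\<And>B. ((A - B) \<union> (B - A) = C) = (B = ?D)" by auto
  let ?g = "\<lambda>A'. (\<Sum>B\<in>Pow {..<n}. if (A' - B) \<union> (B - A') = C then blade A A' * z B * blade_sign q A' B else 0)"
  have g: "?g A' = (if A' = A then (\<Sum>B\<in>Pow {..<n}. if (A - B) \<union> (B - A) = C then z B * blade_sign q A B else 0) else 0)" for A'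
    by (cases "A' = A") (simp_all add: blade_app cong: if_cong)
  have "cl_mult n q (blade A) z C = (\<Sum>A'\<in>Pow {..<n}. ?g A')"
    unfolding cl_mult_def by simp
  also have "\<dots> = (\<Sum>B\<in>Pow {..<n}. if (A - B) \<union> (B - A) = C then z B * blade_sign q A B else 0)"
    unfolding g using A by (simp only: sum.delta finite_Pow_iff finite_lessThan) simp
  also have "\<dots> = (\<Sum>B\<in>Pow {..<n}. if B = ?D then z B * blade_sign q A B else 0)"
    by (simp only: eq)
  also have "\<dots> = (if ?D \<in> Pow {..<n} then z ?D * blade_sign q A ?D else 0)"
    by (simp add: sum.delta')
  also have "\<dots> = blade_sign q A ?D * z ?D"
    using z unfolding cl_carrier_def by auto
  finally show ?thesis .
qed

lemma mult_blade_right: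
  assumes A: "A \<subseteq> {..<n}" and z: "z \<in> cl_carrier n"
  shows "cl_mult n q z (blade A) C = z ((C - A) \<union> (A - C)) * blade_sign q ((C - A) \<union> (A - C)) A"
proof -
  let ?D = "(C - A) \<union> (A - C)"
  have eq: "\<And>B. ((B - A) \<union> (A - B) = C) = (B = ?D)" by auto
  have g: "\<And>B. (\<Sum>A'\<in>Pow {..<n}. if (B - A') \<union> (A' - B) = C then z B * blade A A' * blade_sign q B A' else 0)
      = (if (B - A) \<union> (A - B) = C then z B * blade_sign q B A else 0)"
  proof -
    fix B
    have "\<And>A'. (if (B - A') \<union> (A' - B) = C then z B * blade A A' * blade_sign q B A' else 0)
       = (if A' = A then (if (B - A) \<union> (A - B) = C then z B * blade_sign q B A else 0) else 0)"
      by (simp add: blade_app cong: if_cong)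
    then show "?thesis B" using A by (simp only: sum.delta finite_Pow_iff finite_lessThan) simp
  qed
  have "cl_mult n q z (blade A) C = (\<Sum>B\<in>Pow {..<n}. \<Sum>A'\<in>Pow {..<n}. if (B - A') \<union> (A' - B) = C then z B * blade A A' * blade_sign q B A' else 0)"
    unfolding cl_mult_def by simp
  also have "\<dots> = (\<Sum>B\<in>Pow {..<n}. if (B - A) \<union> (A - B) = C then z B * blade_sign q B A else 0)"
    by (simp only: g)
  also have "\<dots> = (\<Sum>B\<in>Pow {..<n}. if B = ?D then z B * blade_sign q B A else 0)"
    by (simp only: eq)
  also have "\<dots> = (if ?D \<in> Pow {..<n} then z ?D * blade_sign q ?D A else 0)"
    by (simp add: sum.delta')
  also have "\<dots> = z ?D * blade_sign q ?D A"
    using z unfolding cl_carrier_def by auto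
  finally show ?thesis .
qed



lemma sign_conj:
  assumes "finite C"
  shows "blade_sign q {i} C * blade_sign q (sym_diff C {i}) {i} = complex_of_real (q i) * (-1) ^ card (C - {i})"
proof -
  have c1: "card {(a,j). a \<in> {i} \<and> j \<in> C \<and> j < a} = card {j\<in>C. j < i}"
  proof -
    have "{(a,j). a \<in> {i} \<and> j \<in> C \<and> j < a} = (\<lambda>j. (i,j)) ` {j\<in>C. j < i}" by auto
    then show ?thesis by (simp add: card_image inj_on_def)
  qed
  have c2: "card {(a,j). a \<in> sym_diff C {i} \<and> j \<in> {i} \<and> j < a} = card {j\<in>C. i < j}"
  proof -
    have "{(a,j). a \<in> sym_diff C {i} \<and> j \<in> {i} \<and> j < a} = (\<lambda>j. (j,i)) ` {j\<in>C. i < j}" by auto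
    then show ?thesis by (simp add: card_image inj_on_def)
  qed
  have c3: "card {j\<in>C. j < i} + card {j\<in>C. i < j} = card (C - {i})"
  proof -
    have "C - {i} = {j\<in>C. j < i} \<union> {j\<in>C. i < j}" by auto
    moreover have "{j\<in>C. j < i} \<inter> {j\<in>C. i < j} = {}" by auto
    ultimately show ?thesis using assms by (simp add: card_Un_disjoint)
  qed
  have p: "complex_of_real (\<Prod>a\<in>{i} \<inter> C. q a) * complex_of_real (\<Prod>a\<in>sym_diff C {i} \<inter> {i}. q a) = complex_of_real (q i)"
  proof (cases "i \<in> C")
    case True
    then have e1: "{i} \<inter> C = {i}" and e2: "sym_diff C {i} \<inter> {i} = {}" by auto
    show ?thesis unfolding e1 e2 by simp
  next
    case False
    then have e1: "{i} \<inter> C = {}" and e2: "sym_diff C {i} \<inter> {i} = {i}" by auto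
    show ?thesis unfolding e1 e2 by simp
  qed
  let ?a = "card {j\<in>C. j < i}" and ?b = "card {j\<in>C. i < j}"
  let ?P1 = "complex_of_real (\<Prod>a\<in>{i} \<inter> C. q a)" and ?P2 = "complex_of_real (\<Prod>a\<in>sym_diff C {i} \<inter> {i}. q a)"
  have "blade_sign q {i} C * blade_sign q (sym_diff C {i}) {i} = ((-1)^?a * ?P1) * ((-1)^?b * ?P2)"
    by (simp only: blade_sign_def c1 c2)
  also have "\<dots> = ((-1::complex)^?a * (-1)^?b) * (?P1 * ?P2)" by (simp only: mult_ac)
  also have "\<dots> = (-1)^(?a + ?b) * complex_of_real (q i)" by (simp only: power_add p)
  finally show ?thesis by (simp only: c3 mult.commute)
qed



lemma conj_blade:
  assumes i: "i < n" and z: "z \<in> cl_carrier n"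
  shows "cl_mult n q (cl_mult n q (blade {i}) z) (blade {i}) C = complex_of_real (q i) * (-1) ^ card (C - {i}) * z C"
proof (cases "C \<subseteq> {..<n}")
  case True
  then have fin: "finite C" by (rule finite_subset) simp
  have "cl_mult n q (cl_mult n q (blade {i}) z) (blade {i}) C =
     cl_mult n q (blade {i}) z (sym_diff C {i}) * blade_sign q (sym_diff C {i}) {i}"
    using i by (simp add: mult_blade_right mult_carrier)
  also have "\<dots> = blade_sign q {i} C * z C * blade_sign q (sym_diff C {i}) {i}"
  proof -
    have "sym_diff {i} (sym_diff C {i}) = C" by auto
    then show ?thesis using i z by (simp add: mult_blade_left)
  qed
  also have "\<dots> = complex_of_real (q i) * (-1) ^ card (C - {i}) * z C"
    using sign_conj[OF fin, of q i] by (simp add: mult_ac)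
  finally show ?thesis .
next
  case False
  have m: "cl_mult n q (cl_mult n q (blade {i}) z) (blade {i}) \<in> cl_carrier n" by (rule mult_carrier)
  have "cl_mult n q (cl_mult n q (blade {i}) z) (blade {i}) C = 0"
    using m False unfolding cl_carrier_def by blast
  moreover have "z C = 0" using z False unfolding cl_carrier_def by blast
  ultimately show ?thesis by simp
qed



lemma even_card_empty:
  assumes "even (n::nat)" "C \<subseteq> {..<n}" "\<forall>i<n. even (card (C - {i}))"
  shows "C = {}"
proof (rule ccontr)
  assume ne: "C \<noteq> {}"
  have fin: "finite C" by (rule finite_subset[OF assms(2)]) simp
  show False
  proof (cases "even (card C)")
    case True
    obtain i where i: "i \<in> C" using ne by auto
    then have "i < n" using assms(2) by auto
    then have e: "even (card (C - {i}))" using assms(3) by blast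
    have c: "card (C - {i}) = card C - 1" using i fin by simp
    have "card C > 0" using ne fin by auto
    then show False using True e c by simp
  next
    case False
    have "card C \<le> n" using card_mono[OF _ assms(2)] by simp
    moreover have "card C \<noteq> n" using False assms(1) by auto
    ultimately have "card C < card {..<n}" by simp
    then have "C \<noteq> {..<n}" by auto
    then obtain i where i: "i < n" "i \<notin> C" using assms(2) by blast
    then have "C - {i} = C" by blast
    then show False using False assms(3) i(1) by metis
  qed
qed


definition smat :: "complex \<Rightarrow> complex^'k^'k \<Rightarrow> complex^'k^'k" where
  "smat c M = (\<chi> i j. c * M $ i $ j)"

lemma smat_mult_left: "smat c M ** N = smat c (M ** N)"
  by (simp add: smat_def matrix_matrix_mult_def vec_eq_iff sum_distrib_left mult_ac)
lemma smat_mult_right: "M ** smat c N = smat c (M ** N)"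
  by (simp add: smat_def matrix_matrix_mult_def vec_eq_iff sum_distrib_left mult_ac)
lemma smat_zero: "smat c 0 = 0"
  by (simp add: smat_def vec_eq_iff)
lemma smat_vec: "smat c M *v v = c *s (M *v v)"
  by (simp add: smat_def matrix_vector_mult_def vec_eq_iff sum_distrib_left mult_ac)
lemma mat_vec_scale: "M *v (c *s v) = c *s (M *v (v::complex^'k))"
  by (simp add: matrix_vector_mult_def vec_eq_iff sum_distrib_left mult_ac)
lemma smat_one_vec: "smat c (mat 1) *v v = c *s (v::complex^'k)"
  by (simp add: smat_vec)

lemma rep_add: "cl_rep n q \<rho> \<Longrightarrow> x \<in> cl_carrier n \<Longrightarrow> y \<in> cl_carrier n \<Longrightarrow> \<rho> (cl_add x y) = \<rho> x + \<rho> y"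
  unfolding cl_rep_def by blast
lemma rep_scale: "cl_rep n q \<rho> \<Longrightarrow> x \<in> cl_carrier n \<Longrightarrow> \<rho> (cl_scale c x) = smat c (\<rho> x)"
  unfolding cl_rep_def smat_def by blast
lemma rep_mult: "cl_rep n q \<rho> \<Longrightarrow> x \<in> cl_carrier n \<Longrightarrow> y \<in> cl_carrier n \<Longrightarrow> \<rho> (cl_mult n q x y) = \<rho> x ** \<rho> y"
  unfolding cl_rep_def by blast
lemma rep_one: "cl_rep n q \<rho> \<Longrightarrow> \<rho> cl_one = mat 1"
  unfolding cl_rep_def by blast

definition restr :: "nat set \<Rightarrow> clel \<Rightarrow> clel" where
  "restr S z = (\<lambda>C. if (\<forall>i\<in>S. even (card (C - {i}))) then z C else 0)"

lemma restr_carrier: "z \<in> cl_carrier n \<Longrightarrow> restr S z \<in> cl_carrier n"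
  unfolding cl_carrier_def restr_def by auto

lemma restr_step:
  assumes i: "i < n" and qi: "q i \<noteq> 0" and z: "z \<in> cl_carrier n"
  shows "restr (insert i S) z = cl_scale (1/2) (cl_add (restr S z)
           (cl_scale (1 / complex_of_real (q i)) (cl_mult n q (cl_mult n q (blade {i}) (restr S z)) (blade {i}))))"
proof
  fix C
  let ?w = "restr S z"
  have wc: "?w \<in> cl_carrier n" using z by (rule restr_carrier)
  have cb: "cl_mult n q (cl_mult n q (blade {i}) ?w) (blade {i}) C = complex_of_real (q i) * (-1) ^ card (C - {i}) * ?w C"
    by (rule conj_blade[OF i wc])
  have qc: "complex_of_real (q i) \<noteq> 0" using qi by simp
  show "restr (insert i S) z C = cl_scale (1/2) (cl_add ?w
           (cl_scale (1 / complex_of_real (q i)) (cl_mult n q (cl_mult n q (blade {i}) ?w) (blade {i})))) C"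
    unfolding cl_scale_def cl_add_def cb
  proof (cases "even (card (C - {i}))")
    case True
    then show "restr (insert i S) z C = 1 / 2 * (?w C + 1 / complex_of_real (q i) * (complex_of_real (q i) * (- 1) ^ card (C - {i}) * ?w C))"
      using qc by (simp add: restr_def)
  next
    case False
    then show "restr (insert i S) z C = 1 / 2 * (?w C + 1 / complex_of_real (q i) * (complex_of_real (q i) * (- 1) ^ card (C - {i}) * ?w C))"
      using qc by (simp add: restr_def)
  qed
qed

lemma sign_diag_nz:
  assumes "\<forall>i<n. q i \<noteq> 0" "A \<subseteq> {..<n}"
  shows "blade_sign q A A \<noteq> 0"
proof -
  have fin: "finite A" by (rule finite_subset[OF assms(2)]) simp
  show ?thesis unfolding blade_sign_def using assms fin by (auto simp: prod_zero_iff)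
qed

lemma kernel_empty:
  assumes ev: "even n" and q: "\<forall>i<n. q i \<noteq> 0" and rep: "cl_rep n q \<rho>"
    and z: "z \<in> cl_carrier n" and rz: "\<rho> z = 0"
  shows "z {} = 0"
proof -
  have step: "restr S z \<in> cl_carrier n \<and> \<rho> (restr S z) = 0" if "finite S" "S \<subseteq> {..<n}" for S
    using that
  proof (induction S rule: finite_induct)
    case empty
    have "restr {} z = z" by (simp add: restr_def)
    then show ?case using z rz by simp
  next
    case (insert i S)
    let ?w = "restr S z"
    have i: "i < n" using insert by auto
    have w: "?w \<in> cl_carrier n" "\<rho> ?w = 0" using insert by auto
    have bc: "blade {i} \<in> cl_carrier n" using i by (simp add: blade_carrier)
    have m1: "cl_mult n q (blade {i}) ?w \<in> cl_carrier n" by (rule mult_carrier)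
    have m2: "cl_mult n q (cl_mult n q (blade {i}) ?w) (blade {i}) \<in> cl_carrier n" by (rule mult_carrier)
    have r1: "\<rho> (cl_mult n q (cl_mult n q (blade {i}) ?w) (blade {i})) = 0"
      using rep_mult[OF rep m1 bc] rep_mult[OF rep bc w(1)] w(2) by simp
    have s1: "cl_scale (1 / complex_of_real (q i)) (cl_mult n q (cl_mult n q (blade {i}) ?w) (blade {i})) \<in> cl_carrier n"
      using m2 by (rule scale_carrier)
    have a1: "cl_add ?w (cl_scale (1 / complex_of_real (q i)) (cl_mult n q (cl_mult n q (blade {i}) ?w) (blade {i}))) \<in> cl_carrier n"
      using w(1) s1 by (rule add_carrier)
    have "\<rho> (restr (insert i S) z) = 0"
      unfolding restr_step[where i=i and n=n and q=q and z=z and S=S, OF i q[rule_format, OF i] z]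
      using rep_scale[OF rep a1] rep_add[OF rep w(1) s1] rep_scale[OF rep m2] r1 w(2)
      by (simp add: smat_zero)
    then show ?case using restr_carrier[OF z] by simp
  qed
  have all: "\<rho> (restr {..<n} z) = 0" using step[of "{..<n}"] by simp
  have eq: "restr {..<n} z = cl_scale (z {}) cl_one"
  proof
    fix C
    show "restr {..<n} z C = cl_scale (z {}) cl_one C"
    proof (cases "C \<subseteq> {..<n}")
      case True
      show ?thesis
      proof (cases "\<forall>i\<in>{..<n}. even (card (C - {i}))")
        case True2: True
        then have "C = {}" using even_card_empty[OF ev True] by auto
        then show ?thesis using True2 by (simp add: restr_def cl_scale_def cl_one_def)
      next
        case False
        then have "C \<noteq> {}" by auto
        then show ?thesis using False unfolding restr_def cl_scale_def cl_one_def by auto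
      qed
    next
      case False
      then have "z C = 0" "C \<noteq> {}" using z unfolding cl_carrier_def by auto
      then show ?thesis by (simp add: restr_def cl_scale_def cl_one_def)
    qed
  qed
  have m: "smat (z {}) (\<rho> cl_one) = 0"
    using all unfolding eq rep_scale[OF rep one_carrier] .
  then have "smat (z {}) (\<rho> cl_one) $ undefined $ undefined = 0 $ undefined $ undefined"
    by simp
  then show ?thesis by (simp add: smat_def mat_def rep_one[OF rep])
qed

lemma rep_kernel:
  assumes ev: "even n" and q: "\<forall>i<n. q i \<noteq> 0" and rep: "cl_rep n q \<rho>"
    and z: "z \<in> cl_carrier n" and rz: "\<rho> z = 0"
  shows "z = (\<lambda>_. 0)"
proof
  fix A
  show "z A = 0"
  proof (cases "A \<subseteq> {..<n}")
    case True
    have bc: "blade A \<in> cl_carrier n" using True by (rule blade_carrier)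
    have "\<rho> (cl_mult n q (blade A) z) = 0" using rep_mult[OF rep bc z] rz by simp
    then have "cl_mult n q (blade A) z {} = 0"
      using kernel_empty[OF ev q rep mult_carrier] by blast
    then have "blade_sign q A A * z A = 0" using mult_blade_left[OF True z, of q "{}"] by simp
    then show ?thesis using sign_diag_nz[OF q True] by simp
  next
    case False
    then show ?thesis using z unfolding cl_carrier_def by auto
  qed
qed

lemma rep_inj:
  assumes ev: "even n" and q: "\<forall>i<n. q i \<noteq> 0" and rep: "cl_rep n q \<rho>"
    and x: "x \<in> cl_carrier n" and y: "y \<in> cl_carrier n" and e: "\<rho> x = \<rho> y"
  shows "x = y"
proof -
  have s: "cl_scale (-1) y \<in> cl_carrier n" using y by (rule scale_carrier)
  have "\<rho> (cl_add x (cl_scale (-1) y)) = \<rho> x + smat (-1) (\<rho> y)"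
    using rep_add[OF rep x s] rep_scale[OF rep y] by simp
  also have "\<dots> = 0" using e by (simp add: smat_def vec_eq_iff)
  finally have "cl_add x (cl_scale (-1) y) = (\<lambda>_. 0)"
    using rep_kernel[OF ev q rep add_carrier[OF x s]] by blast
  then show ?thesis unfolding cl_add_def cl_scale_def
    by (auto simp: fun_eq_iff dest: fun_cong)
qed



lemma blade_one: "i < n \<Longrightarrow> cl_mult n q (blade {i}) cl_one = blade {i}"
proof
  fix D assume i: "i < n"
  have "cl_mult n q (blade {i}) cl_one D = blade_sign q {i} (sym_diff {i} D) * cl_one (sym_diff {i} D)"
    using i by (simp add: mult_blade_left one_carrier)
  also have "\<dots> = blade {i} D"
  proof (cases "D = {i}")
    case True
    then have "sym_diff {i} D = {}" by auto
    then show ?thesis using True by (simp add: cl_one_def blade_app blade_sign_def)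
  next
    case False
    then have "sym_diff {i} D \<noteq> {}" by auto
    then have c0: "cl_one (sym_diff {i} D) = 0" unfolding cl_one_def by simp
    show ?thesis using False by (simp only: c0 blade_app) simp
  qed
  finally show "cl_mult n q (blade {i}) cl_one D = blade {i} D" .
qed

lemma blade_sq: "i < n \<Longrightarrow> cl_mult n q (blade {i}) (blade {i}) = cl_scale (complex_of_real (q i)) cl_one"
proof
  fix D assume i: "i < n"
  have "cl_mult n q (blade {i}) (blade {i}) D = cl_mult n q (cl_mult n q (blade {i}) cl_one) (blade {i}) D"
    using i by (simp add: blade_one)
  also have "\<dots> = complex_of_real (q i) * (-1) ^ card (D - {i}) * cl_one D"
    using conj_blade[OF i one_carrier] by simp
  also have "\<dots> = cl_scale (complex_of_real (q i)) cl_one D"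
    by (simp add: cl_one_def cl_scale_def)
  finally show "cl_mult n q (blade {i}) (blade {i}) D = cl_scale (complex_of_real (q i)) cl_one D" .
qed

lemma rep_center:
  assumes ev: "even n" and q: "\<forall>i<n. q i \<noteq> 0" and rep: "cl_rep n q \<rho>"
    and z: "z \<in> cl_carrier n" and comm: "\<forall>y\<in>cl_carrier n. \<rho> y ** \<rho> z = \<rho> z ** \<rho> y"
  shows "z = cl_scale (z {}) cl_one"
proof -
  have odd0: "z C = 0" if i: "i < n" and od: "odd (card (C - {i}))" for C i
  proof -
    let ?e = "blade {i}"
    have ec: "?e \<in> cl_carrier n" using i by (simp add: blade_carrier)
    have m1: "cl_mult n q ?e z \<in> cl_carrier n" by (rule mult_carrier)
    have "\<rho> (cl_mult n q (cl_mult n q ?e z) ?e) = \<rho> ?e ** \<rho> z ** \<rho> ?e"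
      using rep_mult[OF rep m1 ec] rep_mult[OF rep ec z] by simp
    also have "\<dots> = \<rho> z ** \<rho> ?e ** \<rho> ?e" using comm ec by simp
    also have "\<dots> = \<rho> z ** \<rho> (cl_mult n q ?e ?e)"
      using rep_mult[OF rep ec ec] by (simp add: matrix_mul_assoc)
    also have "\<dots> = smat (complex_of_real (q i)) (\<rho> z)"
      using i by (simp add: blade_sq rep_scale[OF rep one_carrier] rep_one[OF rep] smat_mult_right)
    also have "\<dots> = \<rho> (cl_scale (complex_of_real (q i)) z)"
      using rep_scale[OF rep z] by simp
    finally have "cl_mult n q (cl_mult n q ?e z) ?e = cl_scale (complex_of_real (q i)) z"
      using rep_inj[OF ev q rep mult_carrier scale_carrier[OF z]] by blast
    then have "cl_mult n q (cl_mult n q ?e z) ?e C = cl_scale (complex_of_real (q i)) z C" by simp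
    then have "complex_of_real (q i) * (-1) * z C = complex_of_real (q i) * z C"
      using conj_blade[OF i z, of q C] od by (simp add: cl_scale_def)
    then show ?thesis using q i by simp
  qed
  show ?thesis
  proof
    fix C
    show "z C = cl_scale (z {}) cl_one C"
    proof (cases "C \<subseteq> {..<n}")
      case True
      show ?thesis
      proof (cases "C = {}")
        case True
        then show ?thesis by (simp add: cl_scale_def cl_one_def)
      next
        case False
        then obtain i where "i < n" "odd (card (C - {i}))"
          using even_card_empty[OF ev \<open>C \<subseteq> {..<n}\<close>] by blast
        then show ?thesis using odd0 False by (simp add: cl_scale_def cl_one_def)
      qed
    next
      case False
      then have "z C = 0" "C \<noteq> {}" using z unfolding cl_carrier_def by auto
      then show ?thesis by (simp add: cl_scale_def cl_one_def)
    qed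
  qed
qed

lemma mult_scale_left: "cl_mult n q (cl_scale t y) w = cl_scale t (cl_mult n q y w)"
  unfolding cl_mult_def cl_scale_def
  by (simp add: sum_distrib_left mult_ac if_distrib cong: if_cong)



lemma herm_zero: "hermitian_form h \<Longrightarrow> h \<psi> 0 = 0"
proof -
  assume H: "hermitian_form h"
  have "h \<psi> (0 + 0) = h \<psi> 0 + h \<psi> 0" using H unfolding hermitian_form_def by blast
  then show ?thesis by simp
qed

lemma herm_diff: "hermitian_form h \<Longrightarrow> h \<psi> (u - v) = h \<psi> u - h \<psi> v"
proof -
  assume H: "hermitian_form h"
  have "h \<psi> ((u - v) + v) = h \<psi> (u - v) + h \<psi> v" using H unfolding hermitian_form_def by blast
  then show ?thesis by simp
qed

lemma herm_eq:
  assumes H: "hermitian_form h" and N: "nondegenerate_form h" and e: "\<forall>\<psi>. h \<psi> u = h \<psi> v"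
  shows "u = v"
proof -
  have "\<forall>\<phi>. h (u - v) \<phi> = 0"
  proof
    fix \<phi>
    have "h (u - v) \<phi> = cnj (h \<phi> (u - v))" using H unfolding hermitian_form_def by blast
    also have "\<dots> = 0" using e herm_diff[OF H] by simp
    finally show "h (u - v) \<phi> = 0" .
  qed
  then have "u - v = 0" using N unfolding nondegenerate_form_def by blast
  then show ?thesis by simp
qed

lemma herm_mat_eq:
  assumes H: "hermitian_form h" and N: "nondegenerate_form h"
    and e: "\<forall>\<psi> \<phi>. h \<psi> (M *v \<phi>) = h \<psi> (P *v \<phi>)"
  shows "M = P"
  unfolding matrix_eq
proof
  fix \<phi> show "M *v \<phi> = P *v \<phi>" using herm_eq[OF H N] e by blast
qed

theorem lemma5:
  fixes n :: nat and q :: "nat \<Rightarrow> real"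
    and \<rho> :: "clel \<Rightarrow> complex^'k^'k"
    and h :: "complex^'k \<Rightarrow> complex^'k \<Rightarrow> complex"
    and b x :: clel
  assumes "even n"
    and "\<forall>i<n. q i \<noteq> 0"
    and "cl_rep n q \<rho>"
    and "\<exists>a\<in>cl_carrier n. \<rho> a \<noteq> 0"
    and "hermitian_form h" and "nondegenerate_form h"
    and "c_compatible n h \<rho>"
    and "b \<in> cl_group n q"
    and "admissible_real_structure n q (\<lambda>a. cl_mult n q (cl_mult n q b (cl_conj a)) (cl_inv n q b))"
    and "x \<in> cl_carrier n"
  shows "(krein_product (\<lambda>\<psi> \<phi>. h \<psi> (\<rho> x *v \<phi>)) \<and>
          sigma_compatible n (\<lambda>a. cl_mult n q (cl_mult n q b (cl_conj a)) (cl_inv n q b))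
            (\<lambda>\<psi> \<phi>. h \<psi> (\<rho> x *v \<phi>)) \<rho>)
         \<longleftrightarrow> (x = cl_cross x \<and> (\<exists>t. t \<noteq> 0 \<and> x = cl_scale t (cl_inv n q b)))"
proof -
  note ev = assms(1) and qnz = assms(2) and rep = assms(3) and H = assms(5) and N = assms(6)
    and cc = assms(7) and xc = assms(10)
  let ?bi = "cl_inv n q b"
  let ?\<sigma> = "\<lambda>a. cl_mult n q (cl_mult n q b (cl_conj a)) ?bi"
  have binv: "b \<in> cl_carrier n" "\<exists>h\<in>cl_carrier n. cl_mult n q b h = cl_one \<and> cl_mult n q h b = cl_one"
    using assms(8) unfolding cl_group_def cl_invertible_def by auto
  have bi: "?bi \<in> cl_carrier n \<and> cl_mult n q b ?bi = cl_one \<and> cl_mult n q ?bi b = cl_one"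
  proof -
    have ex: "\<exists>h. h \<in> cl_carrier n \<and> cl_mult n q b h = cl_one \<and> cl_mult n q h b = cl_one"
      using binv(2) by blast
    show ?thesis unfolding cl_inv_def by (rule someI_ex[OF ex])
  qed
  have bc: "b \<in> cl_carrier n" and bic: "?bi \<in> cl_carrier n" using binv bi by auto
  have Rbbi: "\<rho> b ** \<rho> ?bi = mat 1" using bi rep_mult[OF rep bc bic] rep_one[OF rep] by simp
  have Rbib: "\<rho> ?bi ** \<rho> b = mat 1" using bi rep_mult[OF rep bic bc] rep_one[OF rep] by simp
  have Hadd: "h \<psi> (u + v) = h \<psi> u + h \<psi> v" for \<psi> u v using H unfolding hermitian_form_def by blast
  have Hsc: "h \<psi> (c *s u) = c * h \<psi> u" for \<psi> u c using H unfolding hermitian_form_def by blast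
  have Hsym: "h \<phi> \<psi> = cnj (h \<psi> \<phi>)" for \<psi> \<phi> using H unfolding hermitian_form_def by blast
  have CC: "h (\<rho> a *v \<psi>) \<phi> = h \<psi> (\<rho> (cl_cross a) *v \<phi>)" if "a \<in> cl_carrier n" for a \<psi> \<phi>
    using cc that unfolding c_compatible_def by blast
  have sig_rev: "?\<sigma> (cl_rev a) = cl_mult n q (cl_mult n q b (cl_cross a)) ?bi" for a
    by (simp add: cl_cross_def)
  have Rsig: "\<rho> (?\<sigma> (cl_rev a)) = \<rho> b ** \<rho> (cl_cross a) ** \<rho> ?bi" if "a \<in> cl_carrier n" for a
  proof -
    have ac: "cl_cross a \<in> cl_carrier n" using that by (rule cross_carrier)
    show ?thesis unfolding sig_rev
      using rep_mult[OF rep mult_carrier bic] rep_mult[OF rep bc ac] by simp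
  qed
  show ?thesis
  proof
    assume L: "krein_product (\<lambda>\<psi> \<phi>. h \<psi> (\<rho> x *v \<phi>)) \<and>
          sigma_compatible n ?\<sigma> (\<lambda>\<psi> \<phi>. h \<psi> (\<rho> x *v \<phi>)) \<rho>"
    have Hx: "h \<phi> (\<rho> x *v \<psi>) = cnj (h \<psi> (\<rho> x *v \<phi>))" for \<psi> \<phi>
      using L unfolding krein_product_def hermitian_form_def by blast
    have Nx: "\<And>\<psi>. (\<forall>\<phi>. h \<psi> (\<rho> x *v \<phi>) = 0) \<Longrightarrow> \<psi> = 0"
      using L unfolding krein_product_def nondegenerate_form_def by blast
    have Sx: "h (\<rho> a *v \<psi>) (\<rho> x *v \<phi>) = h \<psi> (\<rho> x *v (\<rho> (?\<sigma> (cl_rev a)) *v \<phi>))"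
      if "a \<in> cl_carrier n" for a \<psi> \<phi>
      using L that unfolding sigma_compatible_def cross_sigma_def by blast
    have "\<rho> x = \<rho> (cl_cross x)"
    proof (rule herm_mat_eq[OF H N], intro allI)
      fix \<psi> \<phi>
      have "h \<psi> (\<rho> x *v \<phi>) = cnj (h \<phi> (\<rho> x *v \<psi>))" by (rule Hx)
      also have "\<dots> = h (\<rho> x *v \<psi>) \<phi>" by (rule Hsym[symmetric])
      also have "\<dots> = h \<psi> (\<rho> (cl_cross x) *v \<phi>)" using CC[OF xc] by simp
      finally show "h \<psi> (\<rho> x *v \<phi>) = h \<psi> (\<rho> (cl_cross x) *v \<phi>)" .
    qed
    then have xx: "x = cl_cross x" using rep_inj[OF ev qnz rep xc cross_carrier[OF xc]] by blast
    have com1: "\<rho> y ** \<rho> x = \<rho> x ** (\<rho> b ** \<rho> y ** \<rho> ?bi)" if yc: "y \<in> cl_carrier n" for y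
    proof (rule herm_mat_eq[OF H N], intro allI)
      fix \<psi> \<phi>
      let ?a = "cl_cross y"
      have ac: "?a \<in> cl_carrier n" using yc by (rule cross_carrier)
      have "h \<psi> ((\<rho> y ** \<rho> x) *v \<phi>) = h \<psi> (\<rho> (cl_cross ?a) *v (\<rho> x *v \<phi>))"
        by (simp add: cross_cross matrix_vector_mul_assoc)
      also have "\<dots> = h (\<rho> ?a *v \<psi>) (\<rho> x *v \<phi>)" using CC[OF ac] by simp
      also have "\<dots> = h \<psi> (\<rho> x *v (\<rho> (?\<sigma> (cl_rev ?a)) *v \<phi>))" by (rule Sx[OF ac])
      also have "\<dots> = h \<psi> ((\<rho> x ** (\<rho> b ** \<rho> y ** \<rho> ?bi)) *v \<phi>)"
        using Rsig[OF ac] by (simp add: cross_cross matrix_vector_mul_assoc)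
      finally show "h \<psi> ((\<rho> y ** \<rho> x) *v \<phi>) = h \<psi> ((\<rho> x ** (\<rho> b ** \<rho> y ** \<rho> ?bi)) *v \<phi>)" .
    qed
    let ?z = "cl_mult n q x b"
    have zc: "?z \<in> cl_carrier n" by (rule mult_carrier)
    have Rz: "\<rho> ?z = \<rho> x ** \<rho> b" by (rule rep_mult[OF rep xc bc])
    have comm: "\<forall>y\<in>cl_carrier n. \<rho> y ** \<rho> ?z = \<rho> ?z ** \<rho> y"
    proof
      fix y assume yc: "y \<in> cl_carrier n"
      have "\<rho> y ** \<rho> ?z = (\<rho> y ** \<rho> x) ** \<rho> b" by (simp add: Rz matrix_mul_assoc)
      also have "\<dots> = \<rho> x ** \<rho> b ** \<rho> y ** (\<rho> ?bi ** \<rho> b)"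
        using com1[OF yc] by (simp add: matrix_mul_assoc)
      also have "\<dots> = \<rho> ?z ** \<rho> y" using Rbib Rz by simp
      finally show "\<rho> y ** \<rho> ?z = \<rho> ?z ** \<rho> y" .
    qed
    define t where "t = ?z {}"
    have zt: "?z = cl_scale t cl_one" unfolding t_def by (rule rep_center[OF ev qnz rep zc comm])
    have "\<rho> x = \<rho> x ** (\<rho> b ** \<rho> ?bi)" using Rbbi by simp
    also have "\<dots> = \<rho> ?z ** \<rho> ?bi" by (simp add: Rz matrix_mul_assoc)
    also have "\<dots> = smat t (\<rho> ?bi)"
      unfolding zt rep_scale[OF rep one_carrier] rep_one[OF rep] smat_mult_left by simp
    also have "\<dots> = \<rho> (cl_scale t ?bi)" using rep_scale[OF rep bic] by simp
    finally have xt: "x = cl_scale t ?bi" using rep_inj[OF ev qnz rep xc scale_carrier[OF bic]] by blast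
    have "t \<noteq> 0"
    proof
      assume t0: "t = 0"
      have "\<rho> x = 0" unfolding xt t0 rep_scale[OF rep bic] by (simp add: smat_def vec_eq_iff)
      then have "(\<chi> i. (1::complex)) = (0::complex^'k)" using Nx herm_zero[OF H] by simp
      then show False by (simp add: vec_eq_iff)
    qed
    then show "x = cl_cross x \<and> (\<exists>t. t \<noteq> 0 \<and> x = cl_scale t ?bi)" using xx xt by blast
  next
    assume R: "x = cl_cross x \<and> (\<exists>t. t \<noteq> 0 \<and> x = cl_scale t ?bi)"
    then obtain t where t0: "t \<noteq> 0" and xt: "x = cl_scale t ?bi" by blast
    have xx: "cl_cross x = x" using R by simp
    have Rx: "\<rho> x = smat t (\<rho> ?bi)" unfolding xt by (rule rep_scale[OF rep bic])
    have herm: "hermitian_form (\<lambda>\<psi> \<phi>. h \<psi> (\<rho> x *v \<phi>))"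
      unfolding hermitian_form_def
    proof (intro conjI allI)
      fix \<psi> \<phi> \<eta>
      show "h \<psi> (\<rho> x *v (\<phi> + \<eta>)) = h \<psi> (\<rho> x *v \<phi>) + h \<psi> (\<rho> x *v \<eta>)"
        by (simp add: matrix_vector_right_distrib Hadd)
    next
      fix \<psi> \<phi> c
      show "h \<psi> (\<rho> x *v (c *s \<phi>)) = c * h \<psi> (\<rho> x *v \<phi>)"
        by (simp add: mat_vec_scale Hsc)
    next
      fix \<psi> \<phi>
      have "cnj (h \<psi> (\<rho> x *v \<phi>)) = h (\<rho> x *v \<phi>) \<psi>" by (rule Hsym[symmetric])
      also have "\<dots> = h \<phi> (\<rho> x *v \<psi>)" using CC[OF xc] xx by simp
      finally show "h \<phi> (\<rho> x *v \<psi>) = cnj (h \<psi> (\<rho> x *v \<phi>))" by simp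
    qed
    have xb: "\<rho> x ** \<rho> b = smat t (mat 1)"
      unfolding Rx smat_mult_left Rbib ..
    have nondeg: "nondegenerate_form (\<lambda>\<psi> \<phi>. h \<psi> (\<rho> x *v \<phi>))"
      unfolding nondegenerate_form_def
    proof (intro allI impI)
      fix \<psi> assume z: "\<forall>\<phi>. h \<psi> (\<rho> x *v \<phi>) = 0"
      have "\<forall>\<phi>. h \<psi> \<phi> = 0"
      proof
        fix \<phi>
        have "\<rho> x *v (\<rho> b *v ((1/t) *s \<phi>)) = \<phi>"
          using t0 by (simp add: matrix_vector_mul_assoc xb smat_one_vec)
        then show "h \<psi> \<phi> = 0" using z by metis
      qed
      then show "\<psi> = 0" using N unfolding nondegenerate_form_def by blast
    qed
    have sig: "sigma_compatible n ?\<sigma> (\<lambda>\<psi> \<phi>. h \<psi> (\<rho> x *v \<phi>)) \<rho>"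
      unfolding sigma_compatible_def cross_sigma_def
    proof (intro ballI allI)
      fix a \<psi> \<phi> assume ac: "a \<in> cl_carrier n"
      have "\<rho> x ** \<rho> (?\<sigma> (cl_rev a)) = smat t (\<rho> ?bi ** \<rho> b ** \<rho> (cl_cross a) ** \<rho> ?bi)"
        unfolding Rsig[OF ac] Rx smat_mult_left by (simp add: matrix_mul_assoc)
      also have "\<dots> = \<rho> (cl_cross a) ** \<rho> x"
        unfolding Rbib Rx smat_mult_right by simp
      finally have e: "\<rho> x ** \<rho> (?\<sigma> (cl_rev a)) = \<rho> (cl_cross a) ** \<rho> x" .
      have "h (\<rho> a *v \<psi>) (\<rho> x *v \<phi>) = h \<psi> (\<rho> (cl_cross a) *v (\<rho> x *v \<phi>))" using CC[OF ac] by simp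
      also have "\<dots> = h \<psi> (\<rho> x *v (\<rho> (?\<sigma> (cl_rev a)) *v \<phi>))"
        by (simp add: matrix_vector_mul_assoc e)
      finally show "h (\<rho> a *v \<psi>) (\<rho> x *v \<phi>) = h \<psi> (\<rho> x *v (\<rho> (?\<sigma> (cl_rev a)) *v \<phi>))" .
    qed
    show "krein_product (\<lambda>\<psi> \<phi>. h \<psi> (\<rho> x *v \<phi>)) \<and> sigma_compatible n ?\<sigma> (\<lambda>\<psi> \<phi>. h \<psi> (\<rho> x *v \<phi>)) \<rho>"
      using herm nondeg sig unfolding krein_product_def by blast
  qed
qed


end
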